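(* Let $n$ be even, $1\le q_n\le n/2$, $I_n=\{(i_1,\dots,i_{q_n}):1\le i_1<\dots<i_{q_n}\le n\}$, and for $R=(i_1,\dots,i_{q_n})\in I_n$ let $\Psi_R=\psi_{i_1}\cdots\psi_{i_{q_n}}\,i^{\lfloor q_n/2\rfloor}$. Let $\alpha:[k]\to I_n$ and write $\Psi_\alpha=\Psi_{\alpha(1)}\cdots\Psi_{\alpha(k)}$. Then: (i) if every block of $\ker\alpha$ has even size, then $\Psi_\alpha=\pm I$; (ii) for every pair partition $\pi\in\mathcal{P}_2(k)$ with $\ker\alpha\ge\pi$, $$\operatorname{tr}(\Psi_\alpha)=(-1)^{q_n\,cr(\pi)+\sum|\alpha(V)\cap\alpha(W)|},$$ where the sum runs over all unordered pairs $\{V,W\}$ of crossing blocks of $\pi$.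
   Context: $\psi_1,\dots,\psi_n$ are Majorana fermions: $2^{n/2}\times2^{n/2}$ matrices with $\psi_i\psi_j+\psi_j\psi_i=2\delta_{ij}I$, realized as $\psi_j=\sigma_3^{\otimes(j-1)}\otimes\sigma_1\otimes 1^{\otimes(n/2-j)}$, $\psi_{n/2+j}=\sigma_3^{\otimes(j-1)}\otimes\sigma_2\otimes 1^{\otimes(n/2-j)}$ with Pauli matrices. $\operatorname{tr}$ is the normalized trace. $\ker\alpha$ is the partition of $[k]=\{1,\dots,k\}$ into nonempty level sets of $\alpha$; for a block $B$ of $\ker\alpha$ (or of a partition below it), $\alpha(B)$ is the common value of $\alpha$ on $B$. $\pi\le\sigma$ means every block of $\pi$ is contained in a block of $\sigma$. $\mathcal{P}_2(k)$ is the set of pair partitions of $[k]$; blocks $\{v_1<v_2\},\{w_1<w_2\}$ cross if $v_1<w_1<v_2<w_2$ or $w_1<v_1<w_2<v_2$, and $cr(\pi)$ is the number of crossing pairs of blocks. For $Q,R\in I_n$, $|Q\cap R|$ is the number of common indices. *)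

theory Defs
  imports Complex_Main "Jordan_Normal_Form.Matrix"
begin

definition kron :: "complex mat \<Rightarrow> complex mat \<Rightarrow> complex mat" where
  "kron A B = mat (dim_row A * dim_row B) (dim_col A * dim_col B)
     (\<lambda>(i, j). A $$ (i div dim_row B, j div dim_col B) * B $$ (i mod dim_row B, j mod dim_col B))"

definition kron_list :: "complex mat list \<Rightarrow> complex mat" where
  "kron_list Ms = foldr kron Ms (1\<^sub>m 1)"

definition sigma1 :: "complex mat" where
  "sigma1 = mat_of_rows_list 2 [[0, 1], [1, 0]]"

definition sigma2 :: "complex mat" where
  "sigma2 = mat_of_rows_list 2 [[0, -\<i>], [\<i>, 0]]"

definition sigma3 :: "complex mat" where
  "sigma3 = mat_of_rows_list 2 [[1, 0], [0, -1]]"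

definition ntr :: "complex mat \<Rightarrow> complex" where
  "ntr A = (\<Sum>i<dim_row A. A $$ (i, i)) / of_nat (dim_row A)"

definition mat_prod_list :: "nat \<Rightarrow> complex mat list \<Rightarrow> complex mat" where
  "mat_prod_list N Ms = foldr (*) Ms (1\<^sub>m N)"

definition majorana :: "nat \<Rightarrow> nat \<Rightarrow> complex mat" where
  "majorana n j =
    (let m = n div 2 in
     if 1 \<le> j \<and> j \<le> m then
       kron_list (replicate (j - 1) sigma3 @ [sigma1] @ replicate (m - j) (1\<^sub>m 2))
     else
       kron_list (replicate (j - m - 1) sigma3 @ [sigma2] @ replicate (m - (j - m)) (1\<^sub>m 2)))"

text \<open>I_n: increasing q-tuples of indices in [n], represented as q-element subsets of {1..n}
  (an increasing tuple is the same as its set of entries, listed in increasing order).\<close>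
definition index_tuples :: "nat \<Rightarrow> nat \<Rightarrow> nat set set" where
  "index_tuples n q = {R. R \<subseteq> {1..n} \<and> card R = q}"

definition Psi :: "nat \<Rightarrow> nat \<Rightarrow> nat set \<Rightarrow> complex mat" where
  "Psi n q R = \<i> ^ (q div 2) \<cdot>\<^sub>m
      mat_prod_list (2 ^ (n div 2)) (map (majorana n) (sorted_list_of_set R))"

definition Psi_alpha :: "nat \<Rightarrow> nat \<Rightarrow> nat \<Rightarrow> (nat \<Rightarrow> nat set) \<Rightarrow> complex mat" where
  "Psi_alpha n q k \<alpha> = mat_prod_list (2 ^ (n div 2)) (map (\<lambda>i. Psi n q (\<alpha> i)) [1..<k+1])"

definition is_partition :: "'a set set \<Rightarrow> 'a set \<Rightarrow> bool" where
  "is_partition P S \<longleftrightarrow> (\<forall>B\<in>P. B \<noteq> {}) \<and> \<Union>P = S \<and>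
     (\<forall>B\<in>P. \<forall>C\<in>P. B \<noteq> C \<longrightarrow> B \<inter> C = {})"

definition ker_part :: "nat \<Rightarrow> (nat \<Rightarrow> 'b) \<Rightarrow> nat set set" where
  "ker_part k \<alpha> = {{j \<in> {1..k}. \<alpha> j = \<alpha> i} | i. i \<in> {1..k}}"

definition part_le :: "'a set set \<Rightarrow> 'a set set \<Rightarrow> bool" where
  "part_le \<pi> \<sigma> \<longleftrightarrow> (\<forall>B\<in>\<pi>. \<exists>C\<in>\<sigma>. B \<subseteq> C)"

definition pair_partitions :: "nat \<Rightarrow> nat set set set" where
  "pair_partitions k = {\<pi>. is_partition \<pi> {1..k} \<and> (\<forall>B\<in>\<pi>. card B = 2)}"

definition crosses :: "nat set \<Rightarrow> nat set \<Rightarrow> bool" where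
  "crosses V W \<longleftrightarrow> (\<exists>v1 v2 w1 w2. V = {v1, v2} \<and> W = {w1, w2} \<and> v1 < v2 \<and> w1 < w2 \<and>
      ((v1 < w1 \<and> w1 < v2 \<and> v2 < w2) \<or> (w1 < v1 \<and> v1 < w2 \<and> w2 < v2)))"

definition crossing_pairs :: "nat set set \<Rightarrow> nat set set set" where
  "crossing_pairs \<pi> = {{V, W} | V W. V \<in> \<pi> \<and> W \<in> \<pi> \<and> crosses V W}"

definition cr :: "nat set set \<Rightarrow> nat" where
  "cr \<pi> = card (crossing_pairs \<pi>)"

definition blk_val :: "(nat \<Rightarrow> 'b) \<Rightarrow> nat set \<Rightarrow> 'b" where
  "blk_val \<alpha> B = the_elem (\<alpha> ` B)"

end

theory Submission
  imports Defs
begin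


lemma sum_div_mod_nat:
  fixes f :: "nat \<Rightarrow> nat \<Rightarrow> 'a::comm_monoid_add"
  shows "(\<Sum>l<a*b. f (l div b) (l mod b)) = (\<Sum>x<a. \<Sum>y<b. f x y)"
proof (cases "b = 0")
  case False
  have "(\<Sum>l<a*b. f (l div b) (l mod b)) = (\<Sum>x<a. \<Sum>l\<in>{x*b..<x*b+b}. f (l div b) (l mod b))"
    using sum.nat_group[of "\<lambda>l. f (l div b) (l mod b)" b a] by simp
  also have "\<dots> = (\<Sum>x<a. \<Sum>y<b. f x y)"
  proof (rule sum.cong[OF refl])
    fix x
    have "(\<Sum>l\<in>{x*b..<x*b+b}. f (l div b) (l mod b)) = (\<Sum>y<b. f ((x*b+y) div b) ((x*b+y) mod b))"
      by (subst sum.atLeastLessThan_shift_0) (simp add: atLeast0LessThan add.commute)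
    also have "\<dots> = (\<Sum>y<b. f x y)" using False by (intro sum.cong) auto
    finally show "(\<Sum>l\<in>{x*b..<x*b+b}. f (l div b) (l mod b)) = (\<Sum>y<b. f x y)" .
  qed
  finally show ?thesis .
qed simp

lemma kron_dims[simp]: "dim_row (kron A B) = dim_row A * dim_row B" "dim_col (kron A B) = dim_col A * dim_col B"
  by (simp_all add: kron_def)

lemma kron_index[simp]: "i < dim_row A * dim_row B \<Longrightarrow> j < dim_col A * dim_col B \<Longrightarrow>
  kron A B $$ (i,j) = A $$ (i div dim_row B, j div dim_col B) * B $$ (i mod dim_row B, j mod dim_col B)"
  by (simp add: kron_def)

lemma kron_carrier: "A \<in> carrier_mat a b \<Longrightarrow> B \<in> carrier_mat c d \<Longrightarrow> kron A B \<in> carrier_mat (a*c) (b*d)"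
  by auto

lemma kron_mult:
  assumes A: "A \<in> carrier_mat ra ca" and B: "B \<in> carrier_mat rb cb"
    and C: "C \<in> carrier_mat ca cc" and D: "D \<in> carrier_mat cb cd"
  shows "kron A B * kron C D = kron (A*C) (B*D)"
proof (rule eq_matI)
  fix i j assume i: "i < dim_row (kron (A*C) (B*D))" and j: "j < dim_col (kron (A*C) (B*D))"
  have i': "i < ra * rb" and j': "j < cc * cd" using i j A B C D by auto
  have rb: "rb > 0" and cd: "cd > 0" using i' j' by (auto intro: ccontr)
  have id: "i div rb < ra" "j div cd < cc" using i' j' by (auto simp: less_mult_imp_div_less)
  have im: "i mod rb < rb" "j mod cd < cd" using rb cd by auto
  have "(kron A B * kron C D) $$ (i,j) = (\<Sum>l<ca*cb. kron A B $$ (i,l) * kron C D $$ (l,j))"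
    using i' j' A B C D by (simp add: scalar_prod_def atLeast0LessThan)
  also have "\<dots> = (\<Sum>l<ca*cb. (A $$ (i div rb, l div cb) * C $$ (l div cb, j div cd)) *
       (B $$ (i mod rb, l mod cb) * D $$ (l mod cb, j mod cd)))"
    using i' j' A B C D by (intro sum.cong) (auto simp: less_mult_imp_div_less)
  also have "\<dots> = (\<Sum>x<ca. \<Sum>y<cb. (A $$ (i div rb, x) * C $$ (x, j div cd)) *
       (B $$ (i mod rb, y) * D $$ (y, j mod cd)))"
    by (rule sum_div_mod_nat)
  also have "\<dots> = (\<Sum>x<ca. A $$ (i div rb, x) * C $$ (x, j div cd)) *
       (\<Sum>y<cb. B $$ (i mod rb, y) * D $$ (y, j mod cd))"
    by (simp add: sum_product)
  also have "\<dots> = kron (A*C) (B*D) $$ (i,j)"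
    using i' j' A B C D id im by (simp add: scalar_prod_def atLeast0LessThan)
  finally show "(kron A B * kron C D) $$ (i,j) = kron (A*C) (B*D) $$ (i,j)" .
qed (use A B C D in auto)

lemma div_mod_bounds: "i < a * (b::nat) \<Longrightarrow> i div b < a \<and> i mod b < b"
  by (metis less_mult_imp_div_less mod_less_divisor mult_0_right not_gr_zero not_less0)

lemma kron_smult_left: "kron (c \<cdot>\<^sub>m A) B = c \<cdot>\<^sub>m kron A B"
  by (rule eq_matI) (auto simp: div_mod_bounds)

lemma kron_smult_right: "kron A (c \<cdot>\<^sub>m B) = c \<cdot>\<^sub>m kron A B"
  by (rule eq_matI) (auto simp: div_mod_bounds)

lemma kron_one: "kron (1\<^sub>m a) (1\<^sub>m b) = 1\<^sub>m (a*b)"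
proof (rule eq_matI)
  fix i j assume "i < dim_row (1\<^sub>m (a*b))" "j < dim_col (1\<^sub>m (a*b))"
  then have ij: "i < a*b" "j < a*b" by auto
  then have b: "b > 0" by (auto intro: ccontr)
  have "(i div b = j div b \<and> i mod b = j mod b) = (i = j)"
    by (metis div_mult_mod_eq)
  then show "kron (1\<^sub>m a) (1\<^sub>m b) $$ (i, j) = 1\<^sub>m (a * b) $$ (i, j)"
    using ij b by (auto simp: less_mult_imp_div_less)
qed auto


lemma mat22_eqI:
  assumes "A \<in> carrier_mat 2 2" "B \<in> carrier_mat 2 2"
    "A $$ (0,0) = B $$ (0,0)" "A $$ (0,1) = B $$ (0,1)" "A $$ (1,0) = B $$ (1,0)" "A $$ (1,1) = B $$ (1,1)"
  shows "A = B"
proof (rule eq_matI)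
  fix i j assume "i < dim_row B" "j < dim_col B"
  then have "i < 2" "j < 2" using assms by auto
  then have "i = 0 \<or> i = 1" "j = 0 \<or> j = 1" by auto
  then show "A $$ (i,j) = B $$ (i,j)" using assms by fast
qed (use assms in auto)
lemma sig_carrier[simp]: "sigma1 \<in> carrier_mat 2 2" "sigma2 \<in> carrier_mat 2 2" "sigma3 \<in> carrier_mat 2 2"
  unfolding sigma1_def sigma2_def sigma3_def mat_of_rows_list_def by (auto simp only: mat_carrier list.size numeral_2_eq_2 Suc_eq_plus1 add_0)

lemma mult22_index: "A \<in> carrier_mat 2 2 \<Longrightarrow> B \<in> carrier_mat 2 2 \<Longrightarrow> i < 2 \<Longrightarrow> j < 2 \<Longrightarrow>
  (A * B) $$ (i,j) = A $$ (i,0) * B $$ (0,j) + A $$ (i,1) * B $$ (1,j)"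
  by (simp add: scalar_prod_def numeral_2_eq_2)

lemma smult22_index: "A \<in> carrier_mat 2 2 \<Longrightarrow> i < 2 \<Longrightarrow> j < 2 \<Longrightarrow> (c \<cdot>\<^sub>m A) $$ (i,j) = c * A $$ (i,j)"
  by auto

lemma mult22_carrier: "A \<in> carrier_mat 2 2 \<Longrightarrow> B \<in> carrier_mat 2 2 \<Longrightarrow> A * B \<in> carrier_mat 2 2"
  by auto

lemma sig_entries:
  "sigma1 $$ (0,0) = 0" "sigma1 $$ (0,1) = 1" "sigma1 $$ (1,0) = 1" "sigma1 $$ (1,1) = 0"
  "sigma2 $$ (0,0) = 0" "sigma2 $$ (0,1) = -\<i>" "sigma2 $$ (1,0) = \<i>" "sigma2 $$ (1,1) = 0"
  "sigma3 $$ (0,0) = 1" "sigma3 $$ (0,1) = 0" "sigma3 $$ (1,0) = 0" "sigma3 $$ (1,1) = -1"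
  by (simp_all add: sigma1_def sigma2_def sigma3_def mat_of_rows_list_def)

lemma sig_dims: "dim_row sigma1 = 2" "dim_col sigma1 = 2" "dim_row sigma2 = 2" "dim_col sigma2 = 2"
  "dim_row sigma3 = 2" "dim_col sigma3 = 2"
  using sig_carrier unfolding carrier_mat_def by auto

lemmas sig_entries' = sig_entries[unfolded One_nat_def]


lemma sig_sq: "sigma1 * sigma1 = 1\<^sub>m 2" "sigma2 * sigma2 = 1\<^sub>m 2" "sigma3 * sigma3 = 1\<^sub>m 2"
  by (rule mat22_eqI; simp add: mult22_index sig_entries sig_entries' mult_carrier_mat[of _ 2 2 _ 2] del: index_mult_mat)+

lemma sig_anti: "sigma1 * sigma2 = (-1) \<cdot>\<^sub>m (sigma2 * sigma1)"
  "sigma1 * sigma3 = (-1) \<cdot>\<^sub>m (sigma3 * sigma1)"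
  "sigma2 * sigma3 = (-1) \<cdot>\<^sub>m (sigma3 * sigma2)"
  "sigma2 * sigma1 = (-1) \<cdot>\<^sub>m (sigma1 * sigma2)"
  "sigma3 * sigma1 = (-1) \<cdot>\<^sub>m (sigma1 * sigma3)"
  "sigma3 * sigma2 = (-1) \<cdot>\<^sub>m (sigma2 * sigma3)"
  by (rule mat22_eqI; simp add: mult22_index sig_entries sig_entries' mult22_carrier smult22_index del: index_mult_mat index_smult_mat)+


lemma smult_one_left[simp]: "(1::complex) \<cdot>\<^sub>m A = A"
  by (rule eq_matI) auto

lemma smult_smult_mat[simp]: "(a::complex) \<cdot>\<^sub>m (b \<cdot>\<^sub>m A) = (a*b) \<cdot>\<^sub>m A"
  by (rule eq_matI) auto

lemma kl_Nil[simp]: "kron_list [] = 1\<^sub>m 1" by (simp add: kron_list_def)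
lemma kl_Cons[simp]: "kron_list (x#xs) = kron x (kron_list xs)" by (simp add: kron_list_def)

lemma kl_carrier: "(\<forall>M\<in>set Ms. M \<in> carrier_mat 2 2) \<Longrightarrow> kron_list Ms \<in> carrier_mat (2^length Ms) (2^length Ms)"
proof (induction Ms)
  case (Cons M Ms)
  then have "kron M (kron_list Ms) \<in> carrier_mat (2 * 2^length Ms) (2 * 2^length Ms)"
    by (intro kron_carrier) auto
  then show ?case by simp
qed simp

lemma kl_mult:
  assumes "length xs = length ys" "\<forall>M\<in>set xs. M \<in> carrier_mat 2 2" "\<forall>M\<in>set ys. M \<in> carrier_mat 2 2"
  shows "kron_list xs * kron_list ys = kron_list (map2 (*) xs ys)"
  using assms
proof (induction xs ys rule: list_induct2)
  case Nil then show ?case by simp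
next
  case (Cons x xs y ys)
  have "kron x (kron_list xs) * kron y (kron_list ys) = kron (x*y) (kron_list xs * kron_list ys)"
    using Cons.prems kl_carrier[of xs] kl_carrier[of ys] Cons.hyps
    by (intro kron_mult[of _ 2 2 _ "2^length xs" "2^length xs" _ 2 _ "2^length xs"]) auto
  then show ?case using Cons by simp
qed

lemma kl_comm:
  assumes "length xs = length ys" "\<forall>M\<in>set xs. M \<in> carrier_mat 2 2" "\<forall>M\<in>set ys. M \<in> carrier_mat 2 2"
    "\<forall>t<length xs. xs!t * ys!t = c t \<cdot>\<^sub>m (ys!t * xs!t)"
  shows "kron_list (map2 (*) xs ys) = (\<Prod>t<length xs. c t) \<cdot>\<^sub>m kron_list (map2 (*) ys xs)"
  using assms
proof (induction xs ys arbitrary: c rule: list_induct2)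
  case Nil then show ?case by simp
next
  case (Cons x xs y ys)
  have h0: "x * y = c 0 \<cdot>\<^sub>m (y * x)" using Cons.prems(3) by force
  have IH: "kron_list (map2 (*) xs ys) = (\<Prod>t<length xs. c (Suc t)) \<cdot>\<^sub>m kron_list (map2 (*) ys xs)"
    using Cons.prems by (intro Cons.IH) auto
  have "kron_list (map2 (*) (x#xs) (y#ys)) = kron (c 0 \<cdot>\<^sub>m (y * x)) ((\<Prod>t<length xs. c (Suc t)) \<cdot>\<^sub>m kron_list (map2 (*) ys xs))"
    using h0 IH by simp
  also have "\<dots> = (c 0 * (\<Prod>t<length xs. c (Suc t))) \<cdot>\<^sub>m kron_list (map2 (*) (y#ys) (x#xs))"
    by (simp add: kron_smult_left kron_smult_right mult.commute)
  also have "c 0 * (\<Prod>t<length xs. c (Suc t)) = (\<Prod>t<length (x#xs). c t)"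
    by (simp only: length_Cons prod.lessThan_Suc_shift)
  finally show ?case .
qed

lemma kl_one: "kron_list (replicate m (1\<^sub>m 2)) = 1\<^sub>m (2^m)"
  by (induction m) (simp_all add: kron_one)


definition fl :: "nat \<Rightarrow> nat \<Rightarrow> complex mat \<Rightarrow> complex mat list" where
  "fl m p a = replicate p sigma3 @ [a] @ replicate (m - p - 1) (1\<^sub>m 2)"

lemma fl_length: "p < m \<Longrightarrow> length (fl m p a) = m"
  by (simp add: fl_def)

lemma fl_nth: "p < m \<Longrightarrow> t < m \<Longrightarrow> fl m p a ! t = (if t < p then sigma3 else if t = p then a else 1\<^sub>m 2)"
  by (auto simp: fl_def nth_append)

lemma fl_carrier: "a \<in> carrier_mat 2 2 \<Longrightarrow> \<forall>M\<in>set (fl m p a). M \<in> carrier_mat 2 2"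
  by (auto simp: fl_def)

definition mpos :: "nat \<Rightarrow> nat \<Rightarrow> nat" where
  "mpos n j = (if j \<le> n div 2 then j - 1 else j - n div 2 - 1)"

definition mtyp :: "nat \<Rightarrow> nat \<Rightarrow> complex mat" where
  "mtyp n j = (if j \<le> n div 2 then sigma1 else sigma2)"

lemma mpos_less: "even n \<Longrightarrow> j \<in> {1..n} \<Longrightarrow> mpos n j < n div 2"
  by (auto simp: mpos_def)

lemma mtyp_carrier: "mtyp n j \<in> carrier_mat 2 2"
  by (simp add: mtyp_def)

lemma majorana_fl: "even n \<Longrightarrow> j \<in> {1..n} \<Longrightarrow> majorana n j = kron_list (fl (n div 2) (mpos n j) (mtyp n j))"
  unfolding majorana_def fl_def mpos_def mtyp_def Let_def
  by (auto simp: Suc_diff_Suc)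

lemma one22: "(1\<^sub>m 2::complex mat) $$ (0,0) = 1" "(1\<^sub>m 2::complex mat) $$ (1,1) = 1"
  by simp_all

lemma sig_neq: "sigma1 \<noteq> sigma2" "sigma1 \<noteq> sigma3" "sigma2 \<noteq> sigma3"
  "sigma1 \<noteq> 1\<^sub>m 2" "sigma2 \<noteq> 1\<^sub>m 2" "sigma3 \<noteq> 1\<^sub>m 2"
proof -
  show "sigma1 \<noteq> sigma2"
  proof
    assume "sigma1 = sigma2"
    then have "(1::complex) = - \<i>" using sig_entries(2,6) by metis
    then show False by (simp add: complex_eq_iff)
  qed
  show "sigma1 \<noteq> sigma3" using sig_entries(1,9) by force
  show "sigma2 \<noteq> sigma3" using sig_entries(5,9) by force
  show "sigma1 \<noteq> 1\<^sub>m 2" using sig_entries(1) one22 by force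
  show "sigma2 \<noteq> 1\<^sub>m 2" using sig_entries(5) one22 by force
  show "sigma3 \<noteq> 1\<^sub>m 2"
  proof
    assume "sigma3 = 1\<^sub>m 2"
    then have "(-1::complex) = 1" using sig_entries(12) one22(2) by metis
    then show False by simp
  qed
qed


lemma anti_fl:
  assumes pm: "p < m" "p' < m" and a: "a \<in> {sigma1, sigma2}" and b: "b \<in> {sigma1, sigma2}"
    and ne: "(p, a) \<noteq> (p', b)" and t: "t < m"
  shows "fl m p a ! t * fl m p' b ! t = (if t = min p p' then -1 else 1) \<cdot>\<^sub>m (fl m p' b ! t * fl m p a ! t)"
proof -
  have ac: "a \<in> carrier_mat 2 2" "b \<in> carrier_mat 2 2" using a b by auto
  have a3: "a * sigma3 = (-1) \<cdot>\<^sub>m (sigma3 * a)" using a sig_anti by auto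
  have b3: "sigma3 * b = (-1) \<cdot>\<^sub>m (b * sigma3)" using b sig_anti by auto
  have Xc: "fl m p a ! t \<in> carrier_mat 2 2" "fl m p' b ! t \<in> carrier_mat 2 2"
    using fl_nth[OF pm(1) t, of a] fl_nth[OF pm(2) t, of b] ac by auto
  consider "t < min p p'" | "t = min p p'" | "t > min p p'" by linarith
  then show ?thesis
  proof cases
    case 1
    then have "t \<noteq> min p p'" by (auto simp: min_def)
    then show ?thesis using 1 fl_nth[OF pm(1) t, of a] fl_nth[OF pm(2) t, of b] by (auto simp: min_def)
  next
    case 2
    show ?thesis
    proof (cases "p = p'")
      case True
      then have "a \<noteq> b" using ne by auto
      then have "a * b = (-1) \<cdot>\<^sub>m (b * a)" using a b sig_anti by auto
      then show ?thesis using 2 True fl_nth[OF pm(1) t, of a] fl_nth[OF pm(2) t, of b] by simp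
    next
      case False
      then show ?thesis using 2 a3 b3 fl_nth[OF pm(1) t, of a] fl_nth[OF pm(2) t, of b]
        by (cases "p < p'") (auto simp: min_def)
    qed
  next
    case 3
    then have "fl m p a ! t = 1\<^sub>m 2 \<or> fl m p' b ! t = 1\<^sub>m 2"
      using fl_nth[OF pm(1) t, of a] fl_nth[OF pm(2) t, of b] by auto
    then show ?thesis
    proof
      assume h: "fl m p a ! t = 1\<^sub>m 2"
      show ?thesis unfolding h using 3 Xc(2)
        by (simp add: left_mult_one_mat[OF Xc(2)] right_mult_one_mat[OF Xc(2)])
    next
      assume h: "fl m p' b ! t = 1\<^sub>m 2"
      show ?thesis unfolding h using 3 Xc(1)
        by (simp add: left_mult_one_mat[OF Xc(1)] right_mult_one_mat[OF Xc(1)])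
    qed
  qed
qed


lemma maj_carrier: "even n \<Longrightarrow> j \<in> {1..n} \<Longrightarrow> majorana n j \<in> carrier_mat (2^(n div 2)) (2^(n div 2))"
  using majorana_fl[of n j] kl_carrier[OF fl_carrier[OF mtyp_carrier]] fl_length[OF mpos_less]
  by metis

lemma maj_sq: assumes "even n" "j \<in> {1..n}" shows "majorana n j * majorana n j = 1\<^sub>m (2^(n div 2))"
proof -
  let ?F = "fl (n div 2) (mpos n j) (mtyp n j)"
  have len: "length ?F = n div 2" using fl_length[OF mpos_less[OF assms]] .
  have "map2 (*) ?F ?F = replicate (n div 2) (1\<^sub>m 2)"
  proof (rule nth_equalityI)
    fix t assume "t < length (map2 (*) ?F ?F)"
    then have t: "t < n div 2" using len by simp
    show "map2 (*) ?F ?F ! t = replicate (n div 2) (1\<^sub>m 2) ! t"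
      using t len fl_nth[OF mpos_less[OF assms] t, of "mtyp n j"] sig_sq
      by (auto simp: mtyp_def)
  qed (simp add: len)
  then show ?thesis
    using majorana_fl[OF assms] kl_mult[of ?F ?F] fl_carrier[OF mtyp_carrier] len kl_one by metis
qed

lemma maj_comm: assumes "even n" "j \<in> {1..n}" "l \<in> {1..n}"
  shows "majorana n j * majorana n l = (-1)^(if j = l then 0 else 1) \<cdot>\<^sub>m (majorana n l * majorana n j)"
proof (cases "j = l")
  case False
  let ?F = "fl (n div 2) (mpos n j) (mtyp n j)" and ?G = "fl (n div 2) (mpos n l) (mtyp n l)"
  have p: "mpos n j < n div 2" "mpos n l < n div 2" using mpos_less assms by auto
  have len: "length ?F = n div 2" "length ?G = n div 2" using fl_length p by auto
  have ne: "(mpos n j, mtyp n j) \<noteq> (mpos n l, mtyp n l)"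
    using False assms sig_neq(1) by (auto simp: mpos_def mtyp_def split: if_splits)
  have ab: "mtyp n j \<in> {sigma1, sigma2}" "mtyp n l \<in> {sigma1, sigma2}" by (auto simp: mtyp_def)
  have "kron_list (map2 (*) ?F ?G) = (\<Prod>t<n div 2. (if t = min (mpos n j) (mpos n l) then -1 else 1)) \<cdot>\<^sub>m kron_list (map2 (*) ?G ?F)"
    using kl_comm[of ?F ?G "\<lambda>t. if t = min (mpos n j) (mpos n l) then -1 else 1"]
      len fl_carrier[OF mtyp_carrier] anti_fl[OF p ab ne] by simp
  also have "(\<Prod>t<n div 2. (if t = min (mpos n j) (mpos n l) then -1 else (1::complex))) = -1"
    using p by (subst prod.delta) auto
  finally have "kron_list (map2 (*) ?F ?G) = (-1) \<cdot>\<^sub>m kron_list (map2 (*) ?G ?F)" .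
  moreover have "majorana n j * majorana n l = kron_list (map2 (*) ?F ?G)"
    using majorana_fl assms kl_mult len fl_carrier[OF mtyp_carrier] by metis
  moreover have "majorana n l * majorana n j = kron_list (map2 (*) ?G ?F)"
    using majorana_fl assms kl_mult len fl_carrier[OF mtyp_carrier] by metis
  ultimately show ?thesis using False by simp
qed simp


lemma neg1_pow_cases: "(-1::complex)^k = 1 \<or> (-1::complex)^k = -1"
  by (cases "even k") auto

locale sgen =
  fixes N :: nat and G :: "'a \<Rightarrow> complex mat" and D :: "'a set" and e :: "'a \<Rightarrow> 'a \<Rightarrow> nat"
  assumes G_carr: "x \<in> D \<Longrightarrow> G x \<in> carrier_mat N N"
    and G_sq: "x \<in> D \<Longrightarrow> G x * G x = 1\<^sub>m N"
    and G_comm: "x \<in> D \<Longrightarrow> y \<in> D \<Longrightarrow> G x * G y = (-1)^(e x y) \<cdot>\<^sub>m (G y * G x)"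
begin

definition P :: "'a list \<Rightarrow> complex mat" where "P w = mat_prod_list N (map G w)"

lemma P_Nil[simp]: "P [] = 1\<^sub>m N" by (simp add: P_def mat_prod_list_def)
lemma P_Cons: "P (x#w) = G x * P w" by (simp add: P_def mat_prod_list_def)

lemma P_carr: "set w \<subseteq> D \<Longrightarrow> P w \<in> carrier_mat N N"
  by (induction w) (auto simp: P_Cons intro!: mult_carrier_mat G_carr)

lemma P_append: "set u \<subseteq> D \<Longrightarrow> set v \<subseteq> D \<Longrightarrow> P (u @ v) = P u * P v"
proof (induction u)
  case Nil then show ?case using P_carr[of v] by simp
next
  case (Cons x u)
  then show ?case using P_carr[of u] P_carr[of v] G_carr[of x]
    by (simp add: P_Cons assoc_mult_mat[of _ N N _ N _ N])
qed

lemma G_P_comm: "x \<in> D \<Longrightarrow> set w \<subseteq> D \<Longrightarrow> G x * P w = (-1)^(\<Sum>y\<leftarrow>w. e x y) \<cdot>\<^sub>m (P w * G x)"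
proof (induction w)
  case Nil then show ?case using G_carr[of x] by simp
next
  case (Cons y w)
  have c: "G x \<in> carrier_mat N N" "G y \<in> carrier_mat N N" "P w \<in> carrier_mat N N"
    using Cons.prems G_carr P_carr by auto
  have "G x * P (y#w) = (G x * G y) * P w" using c by (simp add: P_Cons)
  also have "\<dots> = ((-1)^(e x y) \<cdot>\<^sub>m (G y * G x)) * P w" using G_comm[of x y] Cons.prems by simp
  also have "\<dots> = (-1)^(e x y) \<cdot>\<^sub>m (G y * (G x * P w))"
    using c by (simp add: mult_smult_assoc_mat[of _ N N _ N])
  also have "\<dots> = (-1)^(e x y) \<cdot>\<^sub>m (G y * ((-1)^(\<Sum>y\<leftarrow>w. e x y) \<cdot>\<^sub>m (P w * G x)))"
    using Cons by simp
  also have "\<dots> = (-1)^(\<Sum>y\<leftarrow>y#w. e x y) \<cdot>\<^sub>m (P (y#w) * G x)"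
    using c by (simp add: mult_smult_distrib[of _ N N _ N] P_Cons power_add)
  finally show ?case .
qed

lemma move_cancel:
  assumes "x \<in> D" "set u \<subseteq> D" "set v \<subseteq> D"
  shows "P (x # u @ x # v) = (-1)^(\<Sum>y\<leftarrow>u. e x y) \<cdot>\<^sub>m P (u @ v)"
proof -
  have c: "G x \<in> carrier_mat N N" "P u \<in> carrier_mat N N" "P v \<in> carrier_mat N N"
    using assms G_carr P_carr by auto
  have "P (x # u @ x # v) = G x * (P u * (G x * P v))"
    using assms c by (simp add: P_Cons P_append)
  also have "\<dots> = (G x * P u) * (G x * P v)"
    using c by (intro assoc_mult_mat[symmetric]) auto
  also have "\<dots> = ((-1)^(\<Sum>y\<leftarrow>u. e x y) \<cdot>\<^sub>m (P u * G x)) * (G x * P v)"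
    using G_P_comm assms by simp
  also have "\<dots> = (-1)^(\<Sum>y\<leftarrow>u. e x y) \<cdot>\<^sub>m ((P u * G x) * (G x * P v))"
    using c by (simp add: mult_smult_assoc_mat[of _ N N _ N])
  also have "(P u * G x) * (G x * P v) = P u * (G x * (G x * P v))"
    using c by (intro assoc_mult_mat) auto
  also have "G x * (G x * P v) = (G x * G x) * P v"
    using c by (intro assoc_mult_mat[symmetric]) auto
  also have "P u * ((G x * G x) * P v) = P (u @ v)"
    using c assms G_sq by (simp add: P_append)
  finally show ?thesis .
qed

lemma P_even:
  assumes "set w \<subseteq> D" "\<forall>x. even (count_list w x)"
  shows "\<exists>k. P w = (-1::complex)^k \<cdot>\<^sub>m 1\<^sub>m N"
  using assms
proof (induction "length w" arbitrary: w rule: less_induct)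
  case less
  show ?case
  proof (cases w)
    case Nil then show ?thesis by (intro exI[of _ 0]) simp
  next
    case (Cons x w')
    have "odd (count_list w' x)" using less.prems(2)[rule_format, of x] Cons by simp
    then have "x \<in> set w'" by (metis count_notin even_zero)
    then obtain u v where uv: "w' = u @ x # v" "x \<notin> set u" by (meson split_list_first)
    have D: "x \<in> D" "set u \<subseteq> D" "set v \<subseteq> D" using less.prems(1) Cons uv by auto
    have "\<forall>y. even (count_list (u @ v) y)"
    proof
      fix y
      have "even (count_list w y)" using less.prems(2) by simp
      then show "even (count_list (u @ v) y)" using Cons uv by (cases "y = x") auto
    qed
    moreover have "length (u @ v) < length w" using Cons uv by simp
    ultimately obtain k where k: "P (u @ v) = (-1::complex)^k \<cdot>\<^sub>m 1\<^sub>m N"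
      using less.hyps[of "u @ v"] D by auto
    have "P w = (-1)^(\<Sum>y\<leftarrow>u. e x y) \<cdot>\<^sub>m P (u @ v)"
      using Cons uv move_cancel D by simp
    also have "\<dots> = (-1::complex)^((\<Sum>y\<leftarrow>u. e x y) + k) \<cdot>\<^sub>m 1\<^sub>m N"
      using k by (simp add: power_add)
    finally show ?thesis by blast
  qed
qed

end


lemma doubleton_ord: "(x::nat) < y \<Longrightarrow> u < v \<Longrightarrow> {x,y} = {u,v} \<longleftrightarrow> x = u \<and> y = v"
  by (auto simp: doubleton_eq_iff)

lemma crosses_ord:
  assumes "(a::nat) < b" "w1 < w2"
  shows "crosses {a,b} {w1,w2} \<longleftrightarrow> ((a<w1 \<and> w1<b \<and> b<w2) \<or> (w1<a \<and> a<w2 \<and> w2<b))"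
proof
  assume "crosses {a,b} {w1,w2}"
  then obtain v1 v2 x1 x2 where h: "{a,b} = {v1,v2}" "{w1,w2} = {x1,x2}" "v1 < v2" "x1 < x2"
    "(v1 < x1 \<and> x1 < v2 \<and> v2 < x2) \<or> (x1 < v1 \<and> v1 < x2 \<and> x2 < v2)"
    unfolding crosses_def by blast
  then have "v1 = a" "v2 = b" "x1 = w1" "x2 = w2" using doubleton_ord assms by metis+
  then show "((a<w1 \<and> w1<b \<and> b<w2) \<or> (w1<a \<and> a<w2 \<and> w2<b))" using h(5) by simp
next
  assume "((a<w1 \<and> w1<b \<and> b<w2) \<or> (w1<a \<and> a<w2 \<and> w2<b))"
  then show "crosses {a,b} {w1,w2}" unfolding crosses_def using assms by blast
qed

lemma crosses_sym: "crosses V W \<Longrightarrow> crosses W V"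
  unfolding crosses_def by blast

lemma crosses_irrefl: "\<not> crosses V V"
proof
  assume "crosses V V"
  then obtain v1 v2 x1 x2 where h: "V = {v1,v2}" "V = {x1,x2}" "v1 < v2" "x1 < x2"
    "(v1 < x1 \<and> x1 < v2 \<and> v2 < x2) \<or> (x1 < v1 \<and> v1 < x2 \<and> x2 < v2)"
    unfolding crosses_def by blast
  then have "v1 = x1" "v2 = x2" using doubleton_ord by metis+
  then show False using h(5) by simp
qed

lemma card2_ord: "card (W::nat set) = 2 \<Longrightarrow> \<exists>w1 w2. W = {w1,w2} \<and> w1 < w2"
  by (metis card_2_iff insert_commute linorder_neqE_nat)

lemma finite_cp: "finite \<pi> \<Longrightarrow> finite (crossing_pairs \<pi>)"
proof -
  assume "finite \<pi>"
  moreover have "crossing_pairs \<pi> \<subseteq> Pow \<pi>" unfolding crossing_pairs_def by auto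
  ultimately show ?thesis by (meson finite_Pow_iff finite_subset)
qed

lemma cp_split:
  assumes "V \<in> \<pi>"
  shows "crossing_pairs \<pi> = crossing_pairs (\<pi> - {V}) \<union> (\<lambda>W. {V,W}) ` {W\<in>\<pi>. crosses V W}"
    and "crossing_pairs (\<pi> - {V}) \<inter> (\<lambda>W. {V,W}) ` {W\<in>\<pi>. crosses V W} = {}"
proof -
  show "crossing_pairs \<pi> = crossing_pairs (\<pi> - {V}) \<union> (\<lambda>W. {V,W}) ` {W\<in>\<pi>. crosses V W}"
  proof (intro equalityI subsetI)
    fix p assume "p \<in> crossing_pairs \<pi>"
    then obtain V' W' where p: "p = {V',W'}" "V' \<in> \<pi>" "W' \<in> \<pi>" "crosses V' W'"
      unfolding crossing_pairs_def by blast
    show "p \<in> crossing_pairs (\<pi> - {V}) \<union> (\<lambda>W. {V,W}) ` {W\<in>\<pi>. crosses V W}"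
    proof (cases "V' = V \<or> W' = V")
      case True
      then show ?thesis
      proof
        assume "V' = V" then show ?thesis using p by blast
      next
        assume "W' = V" then have "p = {V, V'}" "crosses V V'" using p crosses_sym by auto
        then show ?thesis using p by blast
      qed
    next
      case False
      then show ?thesis using p unfolding crossing_pairs_def by blast
    qed
  next
    fix p assume "p \<in> crossing_pairs (\<pi> - {V}) \<union> (\<lambda>W. {V,W}) ` {W\<in>\<pi>. crosses V W}"
    then show "p \<in> crossing_pairs \<pi>" using assms unfolding crossing_pairs_def by blast
  qed
  show "crossing_pairs (\<pi> - {V}) \<inter> (\<lambda>W. {V,W}) ` {W\<in>\<pi>. crosses V W} = {}"
    unfolding crossing_pairs_def by blast
qed

lemma sum_cp_split:
  assumes "V \<in> \<pi>" "finite \<pi>"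
  shows "(\<Sum>p\<in>crossing_pairs \<pi>. h p) = (\<Sum>p\<in>crossing_pairs (\<pi> - {V}). h p) + (\<Sum>W\<in>{W\<in>\<pi>. crosses V W}. h {V,W})"
proof -
  have inj: "inj_on (\<lambda>W. {V,W}) {W\<in>\<pi>. crosses V W}"
    by (rule inj_onI) (auto simp: doubleton_eq_iff)
  have f: "finite (crossing_pairs (\<pi> - {V}))" "finite ((\<lambda>W. {V,W}) ` {W\<in>\<pi>. crosses V W})"
    using assms finite_cp by auto
  show ?thesis
    unfolding cp_split(1)[OF assms(1)]
    using sum.union_disjoint[OF f cp_split(2)[OF assms(1)], of h] sum.reindex[OF inj, of h]
    by (simp add: comp_def)
qed

lemma cross_local:
  assumes "W = {w1,w2}" "w1 < w2" "(a::nat) < b" "a < w1" "w1 \<noteq> b" "w2 \<noteq> b"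
    and T: "T = {x\<in>S. a < x \<and> x < b}" "W \<subseteq> S"
  shows "card (W \<inter> T) * (c::nat) = (if crosses {a,b} W then c else 0) + 2 * (if card (W \<inter> T) = 2 then c else 0)"
proof -
  have cr: "crosses {a,b} W \<longleftrightarrow> w1 < b \<and> b < w2" using crosses_ord[OF assms(3,2)] assms by auto
  consider "w2 < b" | "w1 < b \<and> b < w2" | "b < w1" using assms by linarith
  then show ?thesis
  proof cases
    case 1
    then have "W \<inter> T = {w1,w2}" using assms by auto
    then have "card (W \<inter> T) = 2" using assms by auto
    then show ?thesis using cr 1 by auto
  next
    case 2
    then have "W \<inter> T = {w1}" using assms by auto
    then show ?thesis using cr 2 by auto
  next
    case 3
    then have "W \<inter> T = {}" using assms by auto
    then show ?thesis using cr 3 by auto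
  qed
qed

lemma cross_count:
  fixes S :: "nat set" and pp :: "nat set set" and f :: "nat set \<Rightarrow> nat" and g :: "nat \<Rightarrow> nat"
  assumes fin: "finite S" and part: "is_partition pp S" and c2: "\<forall>B\<in>pp. card B = 2"
    and amin: "\<forall>x\<in>S. a \<le> x" and V: "V \<in> pp" "V = {a,b}" "a < b"
    and gf: "\<forall>W\<in>pp. \<forall>l\<in>W. g l = f W"
  shows "\<exists>Y. (\<Sum>l\<in>{x\<in>S. a < x \<and> x < b}. g l) = (\<Sum>W\<in>{W\<in>pp. crosses V W}. f W) + 2 * Y"
proof -
  define T where "T = {x\<in>S. a < x \<and> x < b}"
  define pp' where "pp' = pp - {V}"
  have P1: "\<Union>pp = S" and P2: "\<forall>B\<in>pp. \<forall>C\<in>pp. B \<noteq> C \<longrightarrow> B \<inter> C = {}"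
    using part unfolding is_partition_def by auto
  have finpp: "finite pp" using fin P1 by (metis finite_UnionD)
  have finpp': "finite pp'" using finpp by (simp add: pp'_def)
  have TU: "T = \<Union>((\<lambda>W. W \<inter> T) ` pp')"
  proof (intro equalityI subsetI)
    fix l assume l: "l \<in> T"
    then have "l \<in> S" by (simp add: T_def)
    then obtain W where W: "W \<in> pp" "l \<in> W" using P1 by auto
    have "l \<notin> V" using l V by (auto simp: T_def)
    then have "W \<noteq> V" using W by auto
    then show "l \<in> \<Union>((\<lambda>W. W \<inter> T) ` pp')" using W l by (auto simp: pp'_def)
  qed auto
  have "(\<Sum>l\<in>T. g l) = (\<Sum>W\<in>pp'. \<Sum>l\<in>W \<inter> T. g l)"
    apply (subst TU)
    apply (rule sum.UNION_disjoint[OF finpp'])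
    using fin P2 by (auto simp: T_def pp'_def)
  also have "\<dots> = (\<Sum>W\<in>pp'. card (W \<inter> T) * f W)"
  proof (rule sum.cong[OF refl])
    fix W assume "W \<in> pp'"
    then have "\<forall>l\<in>W \<inter> T. g l = f W" using gf by (auto simp: pp'_def)
    then show "(\<Sum>l\<in>W \<inter> T. g l) = card (W \<inter> T) * f W" by simp
  qed
  also have "\<dots> = (\<Sum>W\<in>pp'. (if crosses V W then f W else 0) + 2 * (if card (W \<inter> T) = 2 then f W else 0))"
  proof (rule sum.cong[OF refl])
    fix W assume W: "W \<in> pp'"
    then have Wpp: "W \<in> pp" "W \<noteq> V" by (auto simp: pp'_def)
    obtain w1 w2 where w: "W = {w1,w2}" "w1 < w2" using card2_ord c2 Wpp by blast
    have WS: "W \<subseteq> S" using P1 Wpp by auto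
    have "W \<inter> V = {}" using P2 Wpp V by auto
    then have nv: "w1 \<noteq> a" "w1 \<noteq> b" "w2 \<noteq> b" using w V by auto
    have "a < w1" using amin WS w nv by force
    then show "card (W \<inter> T) * f W = (if crosses V W then f W else 0) + 2 * (if card (W \<inter> T) = 2 then f W else 0)"
      using cross_local[OF w V(3) _ nv(2,3) T_def WS] V(2) by simp
  qed
  also have "\<dots> = (\<Sum>W\<in>pp'. (if crosses V W then f W else 0)) + 2 * (\<Sum>W\<in>pp'. (if card (W \<inter> T) = 2 then f W else 0))"
    by (simp add: sum.distrib sum_distrib_left)
  also have "(\<Sum>W\<in>pp'. (if crosses V W then f W else 0)) = (\<Sum>W\<in>{W\<in>pp. crosses V W}. f W)"
  proof -
    have "{W\<in>pp'. crosses V W} = {W\<in>pp. crosses V W}" using crosses_irrefl by (auto simp: pp'_def)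
    then show ?thesis using sum.inter_filter[OF finpp', of f "crosses V"] by simp
  qed
  finally show ?thesis unfolding T_def by blast
qed


context sgen begin

lemma P_sq_step:
  assumes "x \<in> D" "set w \<subseteq> D"
  shows "P (x#w) * P (x#w) = (-1)^(\<Sum>y\<leftarrow>w. e x y) \<cdot>\<^sub>m (P w * P w)"
proof -
  have c: "G x \<in> carrier_mat N N" "P w \<in> carrier_mat N N" using assms G_carr P_carr by auto
  have "P (x#w) * P (x#w) = (G x * P w) * (G x * P w)" by (simp add: P_Cons)
  also have "\<dots> = ((-1)^(\<Sum>y\<leftarrow>w. e x y) \<cdot>\<^sub>m (P w * G x)) * (G x * P w)"
    using G_P_comm assms by simp
  also have "\<dots> = (-1)^(\<Sum>y\<leftarrow>w. e x y) \<cdot>\<^sub>m ((P w * G x) * (G x * P w))"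
    using c by (simp add: mult_smult_assoc_mat[of _ N N _ N])
  also have "(P w * G x) * (G x * P w) = P w * (G x * (G x * P w))"
    using c by (intro assoc_mult_mat) auto
  also have "G x * (G x * P w) = (G x * G x) * P w"
    using c by (intro assoc_mult_mat[symmetric]) auto
  also have "P w * ((G x * G x) * P w) = P w * P w"
    using c assms G_sq by simp
  finally show ?thesis .
qed

lemma P_P_comm:
  assumes "set u \<subseteq> D" "set w \<subseteq> D"
  shows "P u * P w = (-1)^(\<Sum>x\<leftarrow>u. \<Sum>y\<leftarrow>w. e x y) \<cdot>\<^sub>m (P w * P u)"
  using assms
proof (induction u)
  case Nil then show ?case using P_carr[of w] by simp
next
  case (Cons x u)
  have c: "G x \<in> carrier_mat N N" "P w \<in> carrier_mat N N" "P u \<in> carrier_mat N N"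
    using Cons.prems G_carr P_carr by auto
  define s where "s = (-1::complex)^(\<Sum>x\<leftarrow>u. \<Sum>y\<leftarrow>w. e x y)"
  define t where "t = (-1::complex)^(\<Sum>y\<leftarrow>w. e x y)"
  have IH: "P u * P w = s \<cdot>\<^sub>m (P w * P u)" using Cons by (simp add: s_def)
  have "P (x#u) * P w = G x * (P u * P w)" using c by (simp add: P_Cons)
  also have "\<dots> = G x * (s \<cdot>\<^sub>m (P w * P u))" using IH by simp
  also have "\<dots> = s \<cdot>\<^sub>m (G x * (P w * P u))" using c by (simp add: mult_smult_distrib[of _ N N _ N])
  also have "G x * (P w * P u) = (G x * P w) * P u" using c by (intro assoc_mult_mat[symmetric]) auto
  also have "G x * P w = t \<cdot>\<^sub>m (P w * G x)" using G_P_comm Cons.prems by (simp add: t_def)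
  also have "(t \<cdot>\<^sub>m (P w * G x)) * P u = t \<cdot>\<^sub>m (P w * (G x * P u))"
    using c by (simp add: mult_smult_assoc_mat[of _ N N _ N])
  also have "s \<cdot>\<^sub>m (t \<cdot>\<^sub>m (P w * (G x * P u))) = (-1)^(\<Sum>x\<leftarrow>x#u. \<Sum>y\<leftarrow>w. e x y) \<cdot>\<^sub>m (P w * P (x#u))"
    by (simp add: s_def t_def P_Cons power_add mult.commute)
  finally show ?case .
qed

lemma P_pairs:
  fixes S :: "nat set" and \<alpha> :: "nat \<Rightarrow> 'a" and pp :: "nat set set" and h :: "nat set set \<Rightarrow> nat"
  assumes "finite S" "\<alpha> ` S \<subseteq> D" "is_partition pp S" "\<forall>B\<in>pp. card B = 2"
    "\<forall>B\<in>pp. \<forall>x\<in>B. \<forall>y\<in>B. \<alpha> x = \<alpha> y"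
    "\<forall>V\<in>pp. \<forall>W\<in>pp. V \<noteq> W \<longrightarrow> h {V,W} = e (blk_val \<alpha> V) (blk_val \<alpha> W)"
  shows "P (map \<alpha> (sorted_list_of_set S)) = (-1)^(\<Sum>p\<in>crossing_pairs pp. h p) \<cdot>\<^sub>m 1\<^sub>m N"
  using assms
proof (induction "card S" arbitrary: S pp rule: less_induct)
  case less
  have P1: "\<Union>pp = S" and P0: "\<forall>B\<in>pp. B \<noteq> {}" and P2: "\<forall>B\<in>pp. \<forall>C\<in>pp. B \<noteq> C \<longrightarrow> B \<inter> C = {}"
    using less.prems(3) unfolding is_partition_def by auto
  show ?case
  proof (cases "S = {}")
    case True
    then have "pp = {}" using P1 P0 by auto
    then show ?thesis using True by (simp add: crossing_pairs_def)
  next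
    case False
    define a where "a = Min S"
    have aS: "a \<in> S" and amin: "\<forall>x\<in>S. a \<le> x" using False less.prems(1) by (auto simp: a_def)
    obtain V where V: "V \<in> pp" "a \<in> V" using aS P1 by auto
    obtain x y where xy: "V = {x,y}" "x \<noteq> y" using less.prems(4) V card_2_iff by metis
    obtain b where Vb: "V = {a,b}" "a \<noteq> b"
    proof (cases "a = x")
      case True then show ?thesis using that xy by blast
    next
      case False then have "a = y" using xy V by auto
      then show ?thesis using that xy by (metis insert_commute)
    qed
    have VS: "V \<subseteq> S" using P1 V by auto
    then have bS: "b \<in> S" using Vb by auto
    then have ab: "a < b" using amin Vb by force
    define T where "T = {x\<in>S. a < x \<and> x < b}"
    define U where "U = {x\<in>S. b < x}"
    define S' where "S' = S - {a,b}"
    define pp' where "pp' = pp - {V}"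
    have finT: "finite T" "finite U" using less.prems(1) by (auto simp: T_def U_def)
    have sortS: "a # sorted_list_of_set T @ b # sorted_list_of_set U = sorted_list_of_set S"
    proof (rule sorted_distinct_set_unique)
      show "sorted (a # sorted_list_of_set T @ b # sorted_list_of_set U)"
        using finT ab by (auto simp: sorted_append T_def U_def less_imp_le)
      show "distinct (a # sorted_list_of_set T @ b # sorted_list_of_set U)"
        using finT ab by (auto simp: T_def U_def)
      show "set (a # sorted_list_of_set T @ b # sorted_list_of_set U) = set (sorted_list_of_set S)"
        using finT ab aS bS amin less.prems(1) by (auto simp: T_def U_def)
    qed auto
    have sortS': "sorted_list_of_set T @ sorted_list_of_set U = sorted_list_of_set S'"
    proof (rule sorted_distinct_set_unique)
      show "sorted (sorted_list_of_set T @ sorted_list_of_set U)"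
        using finT ab by (auto simp: sorted_append T_def U_def less_imp_le)
      show "distinct (sorted_list_of_set T @ sorted_list_of_set U)"
        using finT ab by (auto simp: T_def U_def)
      show "set (sorted_list_of_set T @ sorted_list_of_set U) = set (sorted_list_of_set S')"
        using finT ab aS bS amin less.prems(1) by (auto simp: T_def U_def S'_def)
    qed auto
    define X where "X = \<alpha> a"
    have Xb: "\<alpha> b = X" using less.prems(5) V Vb by (auto simp: X_def)
    have XD: "X \<in> D" using less.prems(2) aS by (auto simp: X_def)
    have DT: "set (map \<alpha> (sorted_list_of_set T)) \<subseteq> D" "set (map \<alpha> (sorted_list_of_set U)) \<subseteq> D"
      using less.prems(2) finT by (auto simp: T_def U_def)
    define E where "E = (\<Sum>y\<leftarrow>map \<alpha> (sorted_list_of_set T). e X y)"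
    have "P (map \<alpha> (sorted_list_of_set S)) =
        P (X # map \<alpha> (sorted_list_of_set T) @ X # map \<alpha> (sorted_list_of_set U))"
      unfolding sortS[symmetric] using Xb by (simp add: X_def)
    also have "\<dots> = (-1)^E \<cdot>\<^sub>m P (map \<alpha> (sorted_list_of_set S'))"
      unfolding sortS'[symmetric] E_def using move_cancel[OF XD DT] by simp
    finally have step: "P (map \<alpha> (sorted_list_of_set S)) = (-1)^E \<cdot>\<^sub>m P (map \<alpha> (sorted_list_of_set S'))" .
    have "S' \<subset> S" using aS by (auto simp: S'_def)
    then have cardS': "card S' < card S" using less.prems(1) by (rule psubset_card_mono[rotated])
    have partS': "is_partition pp' S'"
      unfolding is_partition_def
    proof (intro conjI)
      show "\<forall>B\<in>pp'. B \<noteq> {}" using P0 by (auto simp: pp'_def)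
      show "\<Union>pp' = S'"
      proof (intro equalityI subsetI)
        fix z assume "z \<in> \<Union>pp'"
        then obtain W where W: "W \<in> pp" "W \<noteq> V" "z \<in> W" by (auto simp: pp'_def)
        then have "z \<notin> V" using P2 V by blast
        then show "z \<in> S'" using W P1 Vb by (auto simp: S'_def)
      next
        fix z assume "z \<in> S'"
        then have "z \<in> S" "z \<notin> V" using Vb by (auto simp: S'_def)
        then show "z \<in> \<Union>pp'" using P1 by (auto simp: pp'_def)
      qed
      show "\<forall>B\<in>pp'. \<forall>C\<in>pp'. B \<noteq> C \<longrightarrow> B \<inter> C = {}" using P2 by (auto simp: pp'_def)
    qed
    have IH: "P (map \<alpha> (sorted_list_of_set S')) = (-1)^(\<Sum>p\<in>crossing_pairs pp'. h p) \<cdot>\<^sub>m 1\<^sub>m N"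
    proof (rule less.hyps[OF cardS' _ _ partS'])
      show "finite S'" using less.prems(1) by (simp add: S'_def)
      show "\<alpha> ` S' \<subseteq> D" using less.prems(2) by (auto simp: S'_def)
      show "\<forall>B\<in>pp'. card B = 2" using less.prems(4) unfolding pp'_def by blast
      show "\<forall>B\<in>pp'. \<forall>x\<in>B. \<forall>y\<in>B. \<alpha> x = \<alpha> y" using less.prems(5) unfolding pp'_def by blast
      show "\<forall>V\<in>pp'. \<forall>W\<in>pp'. V \<noteq> W \<longrightarrow> h {V,W} = e (blk_val \<alpha> V) (blk_val \<alpha> W)"
        using less.prems(6) unfolding pp'_def by blast
    qed
    have finpp: "finite pp" using less.prems(1) P1 by (metis finite_UnionD)
    have blkX: "blk_val \<alpha> V = X"
      unfolding blk_val_def using Vb Xb by (simp add: X_def)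
    have blkW: "\<forall>W\<in>pp. \<forall>l\<in>W. e X (\<alpha> l) = e X (blk_val \<alpha> W)"
    proof (intro ballI)
      fix W l assume "W \<in> pp" "l \<in> W"
      then have "\<alpha> ` W = {\<alpha> l}" using less.prems(5) by blast
      then show "e X (\<alpha> l) = e X (blk_val \<alpha> W)" by (simp add: blk_val_def)
    qed
    obtain Y where Y: "(\<Sum>l\<in>T. e X (\<alpha> l)) = (\<Sum>W\<in>{W\<in>pp. crosses V W}. e X (blk_val \<alpha> W)) + 2 * Y"
      using cross_count[OF less.prems(1,3,4) amin V(1) Vb(1) ab blkW] unfolding T_def by blast
    have ET: "E = (\<Sum>l\<in>T. e X (\<alpha> l))"
      unfolding E_def using finT by (simp add: sum_list_distinct_conv_sum_set comp_def)
    have hW: "(\<Sum>W\<in>{W\<in>pp. crosses V W}. h {V,W}) = (\<Sum>W\<in>{W\<in>pp. crosses V W}. e X (blk_val \<alpha> W))"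
    proof (rule sum.cong[OF refl])
      fix W assume "W \<in> {W\<in>pp. crosses V W}"
      then have "W \<in> pp" "W \<noteq> V" using crosses_irrefl by auto
      then show "h {V,W} = e X (blk_val \<alpha> W)" using less.prems(6) V blkX by auto
    qed
    have tot: "E + (\<Sum>p\<in>crossing_pairs pp'. h p) = (\<Sum>p\<in>crossing_pairs pp. h p) + 2 * Y"
      using sum_cp_split[OF V(1) finpp, of h] ET Y hW by (simp add: pp'_def)
    have "P (map \<alpha> (sorted_list_of_set S)) = (-1::complex)^(E + (\<Sum>p\<in>crossing_pairs pp'. h p)) \<cdot>\<^sub>m 1\<^sub>m N"
      using step IH by (simp add: power_add)
    also have "(-1::complex)^(E + (\<Sum>p\<in>crossing_pairs pp'. h p)) = (-1)^(\<Sum>p\<in>crossing_pairs pp. h p)"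
      unfolding tot by (simp add: power_add power_mult)
    finally show ?thesis .
  qed
qed

end


lemma neg1_eq: "even (a + b) \<Longrightarrow> (-1::complex)^a = (-1)^b"
  by (cases "even a") (auto simp: even_add)

lemma even_sq_exp: "even ((q::nat) div 2 + (\<Sum>t<q. t))"
proof (induction q rule: less_induct)
  case (less q)
  show ?case
  proof (cases "q < 4")
    case True
    then have "q = 0 \<or> q = 1 \<or> q = 2 \<or> q = 3" by auto
    moreover have "(\<Sum>t<(3::nat). t) = 3" "(\<Sum>t<(2::nat). t) = 1" by (simp_all add: eval_nat_numeral)
    ultimately show ?thesis by auto
  next
    case False
    then obtain r where r: "q = r + 4" by (metis add.commute le_Suc_ex not_less)
    have "(\<Sum>t<q. t) = (\<Sum>t<r. t) + (4*r + 6)"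
      unfolding r by (simp add: numeral_eq_Suc lessThan_Suc)
    moreover have "q div 2 = r div 2 + 2" unfolding r by simp
    moreover have "even (r div 2 + (\<Sum>t<r. t))" using less.IH r by simp
    ultimately show ?thesis by simp
  qed
qed

lemma count_map_distinct: "distinct xs \<Longrightarrow> count_list (map f xs) y = card {j\<in>set xs. f j = y}"
proof (induction xs)
  case (Cons x xs)
  have fin: "finite {j\<in>set xs. f j = y}" by simp
  have "x \<notin> {j\<in>set xs. f j = y}" using Cons.prems by simp
  show ?case
  proof (cases "f x = y")
    case True
    then have "{j\<in>set (x#xs). f j = y} = insert x {j\<in>set xs. f j = y}" by auto
    then show ?thesis using Cons fin \<open>x \<notin> {j\<in>set xs. f j = y}\<close> True by simp
  next
    case False
    then have "{j\<in>set (x#xs). f j = y} = {j\<in>set xs. f j = y}" by auto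
    then show ?thesis using Cons False by simp
  qed
qed simp

lemma smult_neg1_one: "(-1::complex) \<cdot>\<^sub>m 1\<^sub>m N = - 1\<^sub>m N"
  by (rule eq_matI) auto

lemma ntr_smult_one: "N > 0 \<Longrightarrow> ntr (c \<cdot>\<^sub>m 1\<^sub>m N) = c"
  by (simp add: ntr_def)

lemma maj_sgen: assumes a: "even n" shows "sgen (2^(n div 2)) (majorana n) {1..n} (\<lambda>j l. if j = l then 0 else 1)"
proof (unfold_locales)
  fix x assume "x \<in> {1..n}" then show "majorana n x \<in> carrier_mat (2^(n div 2)) (2^(n div 2))"
    by (rule maj_carrier[OF a])
next
  fix x assume "x \<in> {1..n}" then show "majorana n x * majorana n x = 1\<^sub>m (2^(n div 2))"
    by (rule maj_sq[OF a])
next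
  fix x y assume "x \<in> {1..n}" "y \<in> {1..n}"
  then show "majorana n x * majorana n y = (-1)^(if x = y then 0 else 1) \<cdot>\<^sub>m (majorana n y * majorana n x)"
    by (rule maj_comm[OF a])
qed

lemma maj_word_sq:
  assumes "even n" "distinct w" "set w \<subseteq> {1..n}"
  shows "mat_prod_list (2^(n div 2)) (map (majorana n) w) * mat_prod_list (2^(n div 2)) (map (majorana n) w)
    = (-1)^(\<Sum>t<length w. t) \<cdot>\<^sub>m 1\<^sub>m (2^(n div 2))"
proof -
  interpret M: sgen "2^(n div 2)" "majorana n" "{1..n}" "\<lambda>j l. if j = l then 0 else 1"
    using maj_sgen[OF assms(1)] .
  have "M.P w * M.P w = (-1)^(\<Sum>t<length w. t) \<cdot>\<^sub>m 1\<^sub>m (2^(n div 2))"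
    using assms(2,3)
  proof (induction w)
    case Nil then show ?case by simp
  next
    case (Cons x w)
    have s: "(\<Sum>y\<leftarrow>w. (if x = y then 0 else 1::nat)) = length w"
      using Cons.prems(1) by (induction w) auto
    have "M.P (x#w) * M.P (x#w) = (-1)^(length w) \<cdot>\<^sub>m (M.P w * M.P w)"
      using M.P_sq_step[of x w] Cons.prems s by simp
    also have "\<dots> = (-1)^(length w + (\<Sum>t<length w. t)) \<cdot>\<^sub>m 1\<^sub>m (2^(n div 2))"
      using Cons by (simp add: power_add)
    also have "length w + (\<Sum>t<length w. t) = (\<Sum>t<length (x#w). t)" by (simp add: lessThan_Suc)
    finally show ?case .
  qed
  then show ?thesis by (simp add: M.P_def)
qed

lemma maj_word_comm:
  assumes "even n" "set u \<subseteq> {1..n}" "set w \<subseteq> {1..n}"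
  shows "mat_prod_list (2^(n div 2)) (map (majorana n) u) * mat_prod_list (2^(n div 2)) (map (majorana n) w)
    = (-1)^(\<Sum>x\<leftarrow>u. \<Sum>y\<leftarrow>w. (if x = y then 0 else 1::nat)) \<cdot>\<^sub>m
      (mat_prod_list (2^(n div 2)) (map (majorana n) w) * mat_prod_list (2^(n div 2)) (map (majorana n) u))"
proof -
  interpret M: sgen "2^(n div 2)" "majorana n" "{1..n}" "\<lambda>j l. if j = l then 0 else 1"
    using maj_sgen[OF assms(1)] .
  show ?thesis using M.P_P_comm[OF assms(2,3)] by (simp add: M.P_def)
qed

lemma maj_word_carrier:
  assumes "even n" "set w \<subseteq> {1..n}"
  shows "mat_prod_list (2^(n div 2)) (map (majorana n) w) \<in> carrier_mat (2^(n div 2)) (2^(n div 2))"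
proof -
  interpret M: sgen "2^(n div 2)" "majorana n" "{1..n}" "\<lambda>j l. if j = l then 0 else 1"
    using maj_sgen[OF assms(1)] .
  show ?thesis using M.P_carr[OF assms(2)] by (simp add: M.P_def)
qed

lemma idx_props: "R \<in> index_tuples n q \<Longrightarrow> finite R \<and> R \<subseteq> {1..n} \<and> card R = q"
  unfolding index_tuples_def using finite_subset by auto

lemma psi_carr: "even n \<Longrightarrow> R \<in> index_tuples n q \<Longrightarrow> Psi n q R \<in> carrier_mat (2^(n div 2)) (2^(n div 2))"
proof -
  assume a: "even n" "R \<in> index_tuples n q"
  then have "set (sorted_list_of_set R) \<subseteq> {1..n}" using idx_props by auto
  then show ?thesis unfolding Psi_def using maj_word_carrier[OF a(1)] by (intro smult_carrier_mat) 
qed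

lemma sum_neq_count:
  assumes "finite R" "finite S"
  shows "(\<Sum>x\<in>R. \<Sum>y\<in>S. (if x = y then 0 else 1::nat)) + card (R \<inter> S) = card R * card S"
proof -
  have "(\<Sum>x\<in>R. \<Sum>y\<in>S. (if x = y then 0 else 1::nat)) + card (R \<inter> S)
      = (\<Sum>x\<in>R. (\<Sum>y\<in>S. (if x = y then 0 else 1::nat)) + (if x \<in> S then 1 else 0))"
    using assms by (simp add: sum.distrib sum.If_cases Int_def)
  also have "\<dots> = (\<Sum>x\<in>R. card S)"
  proof (rule sum.cong[OF refl])
    fix x
    have "(\<Sum>y\<in>S. (if x = y then 0 else 1::nat)) = card (S - {x})"
      using assms(2) by (simp add: sum.If_cases Diff_eq)
    then show "(\<Sum>y\<in>S. (if x = y then 0 else 1::nat)) + (if x \<in> S then 1 else 0) = card S"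
    proof (cases "x \<in> S")
      case True
      then have "card S > 0" using assms(2) card_gt_0_iff by blast
      then show ?thesis using True \<open>(\<Sum>y\<in>S. (if x = y then 0 else 1::nat)) = card (S - {x})\<close> assms(2)
        by (simp add: card_Diff_singleton)
    qed (use \<open>(\<Sum>y\<in>S. (if x = y then 0 else 1::nat)) = card (S - {x})\<close> in simp)
  qed
  finally show ?thesis by simp
qed

lemma psi_sq:
  assumes "even n" "R \<in> index_tuples n q"
  shows "Psi n q R * Psi n q R = 1\<^sub>m (2^(n div 2))"
proof -
  let ?N = "2^(n div 2)::nat"
  let ?A = "mat_prod_list ?N (map (majorana n) (sorted_list_of_set R))"
  have R: "finite R" "R \<subseteq> {1..n}" "card R = q" using idx_props[OF assms(2)] by auto
  have A: "?A \<in> carrier_mat ?N ?N" using maj_word_carrier[OF assms(1)] R by simp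
  have sq: "?A * ?A = (-1)^(\<Sum>t<q. t) \<cdot>\<^sub>m 1\<^sub>m ?N"
    using maj_word_sq[OF assms(1), of "sorted_list_of_set R"] R by simp
  have "Psi n q R * Psi n q R = (\<i>^(q div 2) * \<i>^(q div 2)) \<cdot>\<^sub>m (?A * ?A)"
    unfolding Psi_def using A by (simp add: mult_smult_assoc_mat[of _ ?N ?N _ ?N] mult_smult_distrib[of _ ?N ?N _ ?N])
  also have "\<i>^(q div 2) * \<i>^(q div 2) = (-1::complex)^(q div 2)"
    by (metis power2_i power_add power_mult mult_2 power_mult_distrib)
  finally have "Psi n q R * Psi n q R = (-1::complex)^(q div 2 + (\<Sum>t<q. t)) \<cdot>\<^sub>m 1\<^sub>m ?N"
    using sq by (simp add: power_add)
  also have "(-1::complex)^(q div 2 + (\<Sum>t<q. t)) = 1"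
    using even_sq_exp[of q] neg_one_even_power by blast
  finally show ?thesis by simp
qed

lemma psi_comm:
  assumes "even n" "R \<in> index_tuples n q" "S \<in> index_tuples n q"
  shows "Psi n q R * Psi n q S = (-1)^(q + card (R \<inter> S)) \<cdot>\<^sub>m (Psi n q S * Psi n q R)"
proof -
  let ?N = "2^(n div 2)::nat"
  let ?A = "mat_prod_list ?N (map (majorana n) (sorted_list_of_set R))"
  let ?B = "mat_prod_list ?N (map (majorana n) (sorted_list_of_set S))"
  let ?c = "\<i>^(q div 2)::complex"
  have R: "finite R" "R \<subseteq> {1..n}" "card R = q" using idx_props[OF assms(2)] by auto
  have S: "finite S" "S \<subseteq> {1..n}" "card S = q" using idx_props[OF assms(3)] by auto
  have A: "?A \<in> carrier_mat ?N ?N" using maj_word_carrier[OF assms(1)] R by simp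
  have B: "?B \<in> carrier_mat ?N ?N" using maj_word_carrier[OF assms(1)] S by simp
  define E where "E = (\<Sum>x\<leftarrow>sorted_list_of_set R. \<Sum>y\<leftarrow>sorted_list_of_set S. (if x = y then 0 else 1::nat))"
  have AB: "?A * ?B = (-1)^E \<cdot>\<^sub>m (?B * ?A)"
    unfolding E_def using maj_word_comm[OF assms(1), of "sorted_list_of_set R" "sorted_list_of_set S"] R S by simp
  have E2: "E = (\<Sum>x\<in>R. \<Sum>y\<in>S. (if x = y then 0 else 1::nat))"
    unfolding E_def using R S by (simp add: sum_list_distinct_conv_sum_set)
  have "E + card (R \<inter> S) = q * q" using sum_neq_count[OF R(1) S(1)] E2 R S by simp
  then have "even (E + (q + card (R \<inter> S)))"
    by (metis add.assoc add.commute even_add even_mult_iff mult_2 odd_even_add)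
  then have sgn: "(-1::complex)^E = (-1)^(q + card (R \<inter> S))" by (rule neg1_eq)
  have "Psi n q R * Psi n q S = (?c * ?c) \<cdot>\<^sub>m (?A * ?B)"
    unfolding Psi_def using A B by (simp add: mult_smult_assoc_mat[of _ ?N ?N _ ?N] mult_smult_distrib[of _ ?N ?N _ ?N])
  also have "\<dots> = (?c * ?c * (-1)^E) \<cdot>\<^sub>m (?B * ?A)" using AB by simp
  also have "\<dots> = (-1)^E \<cdot>\<^sub>m (Psi n q S * Psi n q R)"
    unfolding Psi_def using A B by (simp add: mult_smult_assoc_mat[of _ ?N ?N _ ?N] mult_smult_distrib[of _ ?N ?N _ ?N] mult.commute)
  finally show ?thesis using sgn by simp
qed

lemma psi_sgen: assumes a: "even n" shows "sgen (2^(n div 2)) (Psi n q) (index_tuples n q) (\<lambda>R S. q + card (R \<inter> S))"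
proof (unfold_locales)
  fix x assume "x \<in> index_tuples n q" then show "Psi n q x \<in> carrier_mat (2^(n div 2)) (2^(n div 2))"
    by (rule psi_carr[OF a])
next
  fix x assume "x \<in> index_tuples n q" then show "Psi n q x * Psi n q x = 1\<^sub>m (2^(n div 2))"
    by (rule psi_sq[OF a])
next
  fix x y assume "x \<in> index_tuples n q" "y \<in> index_tuples n q"
  then show "Psi n q x * Psi n q y = (-1)^(q + card (x \<inter> y)) \<cdot>\<^sub>m (Psi n q y * Psi n q x)"
    by (rule psi_comm[OF a])
qed


theorem lemma3p3:
  fixes n q k :: nat and \<alpha> :: "nat \<Rightarrow> nat set"
  assumes "even n" and "1 \<le> q" and "q \<le> n div 2"
    and "\<forall>i\<in>{1..k}. \<alpha> i \<in> index_tuples n q"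
  shows "((\<forall>B\<in>ker_part k \<alpha>. even (card B)) \<longrightarrow>
            (Psi_alpha n q k \<alpha> = 1\<^sub>m (2 ^ (n div 2)) \<or> Psi_alpha n q k \<alpha> = - 1\<^sub>m (2 ^ (n div 2))))
       \<and> (\<forall>\<pi>\<in>pair_partitions k. part_le \<pi> (ker_part k \<alpha>) \<longrightarrow>
            ntr (Psi_alpha n q k \<alpha>) =
              (-1) ^ (q * cr \<pi> + (\<Sum>p\<in>crossing_pairs \<pi>. card (\<Inter>((blk_val \<alpha>) ` p)))))"
proof -
  let ?N = "2^(n div 2)::nat"
  interpret L: sgen ?N "Psi n q" "index_tuples n q" "\<lambda>R S. q + card (R \<inter> S)"
    using psi_sgen[OF assms(1)] .
  have PA: "Psi_alpha n q k \<alpha> = L.P (map \<alpha> [1..<k+1])"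
    by (simp add: Psi_alpha_def L.P_def comp_def del: upt_Suc)
  have D: "set (map \<alpha> [1..<k+1]) \<subseteq> index_tuples n q" using assms(4) by auto
  have Npos: "?N > 0" by simp
  have setk: "set [1..<k+1] = {1..k}" by auto
  show ?thesis
  proof (intro conjI impI ballI)
    assume ev: "\<forall>B\<in>ker_part k \<alpha>. even (card B)"
    have "\<forall>R. even (count_list (map \<alpha> [1..<k+1]) R)"
    proof
      fix R
      have "count_list (map \<alpha> [1..<k+1]) R = card {j \<in> {1..k}. \<alpha> j = R}"
        using count_map_distinct[of "[1..<k+1]" \<alpha> R] unfolding setk by (simp del: upt_Suc)
      moreover have "even (card {j\<in>{1..k}. \<alpha> j = R})"
      proof (cases "\<exists>i\<in>{1..k}. \<alpha> i = R")
        case True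
        then obtain i where i: "i \<in> {1..k}" "\<alpha> i = R" by blast
        then have "{j\<in>{1..k}. \<alpha> j = R} \<in> ker_part k \<alpha>" unfolding ker_part_def by blast
        then show ?thesis using ev by blast
      next
        case False
        then have e0: "{j\<in>{1..k}. \<alpha> j = R} = {}" by auto
        show ?thesis unfolding e0 by simp
      qed
      ultimately show "even (count_list (map \<alpha> [1..<k+1]) R)" by simp
    qed
    then obtain k' where k': "L.P (map \<alpha> [1..<k+1]) = (-1::complex)^k' \<cdot>\<^sub>m 1\<^sub>m ?N"
      using L.P_even D by blast
    show "Psi_alpha n q k \<alpha> = 1\<^sub>m ?N \<or> Psi_alpha n q k \<alpha> = - 1\<^sub>m ?N"
      using neg1_pow_cases[of k'] PA k' smult_neg1_one by auto
  next
    fix pp assume pp: "pp \<in> pair_partitions k" and le: "part_le pp (ker_part k \<alpha>)"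
    have part: "is_partition pp {1..k}" "\<forall>B\<in>pp. card B = 2" using pp by (auto simp: pair_partitions_def)
    have const: "\<forall>B\<in>pp. \<forall>x\<in>B. \<forall>y\<in>B. \<alpha> x = \<alpha> y"
    proof (intro ballI)
      fix B x y assume B: "B \<in> pp" "x \<in> B" "y \<in> B"
      then obtain C where C: "C \<in> ker_part k \<alpha>" "B \<subseteq> C" using le unfolding part_le_def by blast
      then obtain i where "C = {j\<in>{1..k}. \<alpha> j = \<alpha> i}" unfolding ker_part_def by blast
      then show "\<alpha> x = \<alpha> y" using C B by auto
    qed
    have "L.P (map \<alpha> (sorted_list_of_set {1..k})) =
        (-1)^(\<Sum>p\<in>crossing_pairs pp. q + card (\<Inter>((blk_val \<alpha>) ` p))) \<cdot>\<^sub>m 1\<^sub>m ?N"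
      by (rule L.P_pairs[OF _ _ part(1) part(2) const]) (use assms(4) in auto)
    moreover have "sorted_list_of_set {1..k} = [1..<k+1]"
    proof -
      have "{1..k} = {1..<k+1}" by auto
      then show ?thesis by simp
    qed
    ultimately have "Psi_alpha n q k \<alpha> = (-1)^(\<Sum>p\<in>crossing_pairs pp. q + card (\<Inter>((blk_val \<alpha>) ` p))) \<cdot>\<^sub>m 1\<^sub>m ?N"
      using PA by simp
    then have "ntr (Psi_alpha n q k \<alpha>) = (-1)^(\<Sum>p\<in>crossing_pairs pp. q + card (\<Inter>((blk_val \<alpha>) ` p)))"
      using ntr_smult_one[OF Npos] by simp
    also have "(\<Sum>p\<in>crossing_pairs pp. q + card (\<Inter>((blk_val \<alpha>) ` p))) =
        q * cr pp + (\<Sum>p\<in>crossing_pairs pp. card (\<Inter>((blk_val \<alpha>) ` p)))"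
      by (simp add: sum.distrib cr_def mult.commute)
    finally show "ntr (Psi_alpha n q k \<alpha>) =
        (-1) ^ (q * cr pp + (\<Sum>p\<in>crossing_pairs pp. card (\<Inter>((blk_val \<alpha>) ` p))))" .
  qed
qed


end
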